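(* $\Delta_0$ is the union of the good simplices.
   Context: Let $k\ge2$, $n=2k-1$, $e_1,\dots,e_k$ the standard basis of $\mathbb R^k$, $r_{(k)}=(r,\dots,r)\in\mathbb R^k$. In $\mathbb R^{2k}$ set $A_j=(e_j,0_{(k)})$, $B_j=\frac1{2n}(2_{(k)}-e_j,2_{(k)}-e_j)$, $C_j=(0_{(k)},e_j)$ for $j=1,\dots,k$; $A,B,C$ the corresponding $k$-element sets and $X=A\cup B\cup C$. $\langle\cdot\rangle$ denotes convex hull. $\Delta_0=\langle A\cup C\rangle$ is the standard simplex. A $2k$-element subset $S\subset X$ is good if it contains no set $\{A_j,B_j,C_j\}$ and $S\ne A\cup C$; a good simplex is $\langle S\rangle$ for a good set $S$. *)

theory Defs
  imports "HOL-Analysis.Analysis"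
begin

text \<open>Points of R^(2k) are represented as pairs in (real^'n) x (real^'n), k = CARD('n).
  The first component is the first k coordinates, the second the last k coordinates.\<close>

definition ptA :: "'n::finite \<Rightarrow> (real^'n) \<times> (real^'n)" where
  "ptA j = (axis j 1, 0)"

definition ptC :: "'n::finite \<Rightarrow> (real^'n) \<times> (real^'n)" where
  "ptC j = (0, axis j 1)"

definition ptB :: "'n::finite \<Rightarrow> (real^'n) \<times> (real^'n)" where
  "ptB j = (let n = 2 * real CARD('n) - 1;
                v = (\<chi> i. 2) - axis j 1
            in (1 / (2 * n)) *\<^sub>R (v, v))"

definition setA :: "((real^'n::finite) \<times> (real^'n)) set" where
  "setA = range ptA"

definition setB :: "((real^'n::finite) \<times> (real^'n)) set" where
  "setB = range ptB"

definition setC :: "((real^'n::finite) \<times> (real^'n)) set" where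
  "setC = range ptC"

definition setX :: "((real^'n::finite) \<times> (real^'n)) set" where
  "setX = setA \<union> setB \<union> setC"

definition good_set :: "((real^'n::finite) \<times> (real^'n)) set \<Rightarrow> bool" where
  "good_set S \<longleftrightarrow> S \<subseteq> setX \<and> card S = 2 * CARD('n)
     \<and> (\<forall>j. \<not> {ptA j, ptB j, ptC j} \<subseteq> S)
     \<and> S \<noteq> setA \<union> setC"

end

theory Submission
  imports Defs
begin

lemma nr_pos: "2 * real CARD('n::finite) - 1 > 0"
proof -
  have "CARD('n) \<ge> 1" using card_ge_0_finite[of "UNIV::'n set"] by simp
  then have "real CARD('n) \<ge> 1" by simp
  then show ?thesis by linarith
qed

lemma ptB_fst: "fst (ptB j :: (real^'n::finite) \<times> (real^'n)) $ i
   = (2 - (if i = j then 1 else 0)) / (2 * (2 * real CARD('n) - 1))"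
  by (simp add: ptB_def Let_def axis_def)

lemma ptB_snd: "snd (ptB j :: (real^'n::finite) \<times> (real^'n)) $ i
   = (2 - (if i = j then 1 else 0)) / (2 * (2 * real CARD('n) - 1))"
  by (simp add: ptB_def Let_def axis_def)

lemma ptA_fst: "fst (ptA j :: (real^'n::finite) \<times> (real^'n)) $ i = (if i = j then 1 else 0)"
  by (simp add: ptA_def axis_def)
lemma ptA_snd: "snd (ptA j :: (real^'n::finite) \<times> (real^'n)) = 0"
  by (simp add: ptA_def)
lemma ptC_snd: "snd (ptC j :: (real^'n::finite) \<times> (real^'n)) $ i = (if i = j then 1 else 0)"
  by (simp add: ptC_def axis_def)
lemma ptC_fst: "fst (ptC j :: (real^'n::finite) \<times> (real^'n)) = 0"
  by (simp add: ptC_def)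

lemma ptB_pos: "fst (ptB j :: (real^'n::finite) \<times> (real^'n)) $ i > 0"
  "snd (ptB j :: (real^'n::finite) \<times> (real^'n)) $ i > 0"
  using nr_pos[where 'n='n] by (auto simp: ptB_fst ptB_snd)

lemma ptA_ne_B: "ptA i \<noteq> (ptB j :: (real^'n::finite) \<times> (real^'n))"
  using ptB_pos(2)[of j i] ptA_snd[of i] by (metis less_irrefl zero_index)
lemma ptC_ne_B: "ptC i \<noteq> (ptB j :: (real^'n::finite) \<times> (real^'n))"
  using ptB_pos(1)[of j i] ptC_fst[of i] by (metis less_irrefl zero_index)
lemma ptA_ne_C: "ptA i \<noteq> (ptC j :: (real^'n::finite) \<times> (real^'n))"
  by (simp add: ptA_def ptC_def)
lemma ptA_inj: "(ptA i = (ptA j :: (real^'n::finite) \<times> (real^'n))) = (i = j)"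
  by (simp add: ptA_def axis_eq_axis)
lemma ptC_inj: "(ptC i = (ptC j :: (real^'n::finite) \<times> (real^'n))) = (i = j)"
  by (simp add: ptC_def axis_eq_axis)
lemma ptB_inj: "(ptB i = (ptB j :: (real^'n::finite) \<times> (real^'n))) = (i = j)"
proof
  assume h: "ptB i = (ptB j :: (real^'n::finite) \<times> (real^'n))"
  show "i = j"
  proof (rule ccontr)
    assume "i \<noteq> j"
    have "fst (ptB i :: (real^'n::finite) \<times> (real^'n)) $ i = fst (ptB j :: (real^'n::finite) \<times> (real^'n)) $ i"
      using h by simp
    then show False using \<open>i \<noteq> j\<close> nr_pos[where 'n='n] by (simp add: ptB_fst)
  qed
qed simp


lemma sumB: "(\<Sum>i\<in>UNIV. fst (ptB j :: (real^'n::finite) \<times> (real^'n)) $ i) = 1/2"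
  "(\<Sum>i\<in>UNIV. snd (ptB j :: (real^'n::finite) \<times> (real^'n)) $ i) = 1/2"
proof -
  let ?nr = "2 * real CARD('n) - 1"
  have s: "(\<Sum>i\<in>(UNIV::'n set). (2 - (if i = j then 1 else 0)) / (2 * ?nr)) = 1/2"
  proof -
    have "(\<Sum>i\<in>(UNIV::'n set). (2 - (if i = j then 1 else 0)) / (2 * ?nr))
       = (\<Sum>i\<in>(UNIV::'n set). (2 - (if i = j then 1 else 0))) / (2 * ?nr)"
      by (simp add: sum_divide_distrib)
    also have "(\<Sum>i\<in>(UNIV::'n set). (2 - (if i = j then 1 else 0)::real)) = ?nr"
      by (simp add: sum_subtractf)
    finally show ?thesis using nr_pos[where 'n='n] by simp
  qed
  show "(\<Sum>i\<in>UNIV. fst (ptB j :: (real^'n::finite) \<times> (real^'n)) $ i) = 1/2"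
    using s by (simp add: ptB_fst)
  show "(\<Sum>i\<in>UNIV. snd (ptB j :: (real^'n::finite) \<times> (real^'n)) $ i) = 1/2"
    using s by (simp add: ptB_snd)
qed

lemma mult_if01: "(x::real) * (if P then 1 else 0) = (if P then x else 0)" by simp

lemma combA: "(\<Sum>i\<in>UNIV. w i *\<^sub>R ptA i) = ((\<chi> i. w i), 0 :: real^'n::finite)"
  by (simp add: vec_eq_iff prod_eq_iff fst_sum snd_sum sum_component ptA_def axis_def mult_if01)

lemma combC: "(\<Sum>i\<in>UNIV. w i *\<^sub>R ptC i) = (0 :: real^'n::finite, (\<chi> i. w i))"
  by (simp add: vec_eq_iff prod_eq_iff fst_sum snd_sum sum_component ptC_def axis_def mult_if01)

lemma B_in_hull: "ptB j \<in> convex hull (setA \<union> setC :: ((real^'n::finite) \<times> (real^'n)) set)"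
proof -
  define w where "w i = 2 * fst (ptB j :: (real^'n::finite) \<times> (real^'n)) $ i" for i
  have w0: "w i \<ge> 0" for i using ptB_pos(1)[of j i] by (simp add: w_def)
  have w1: "sum w UNIV = 1" using sumB(1)[of j] by (simp add: w_def sum_distrib_left[symmetric])
  have "(\<Sum>i\<in>UNIV. w i *\<^sub>R ptA i) \<in> convex hull (setA \<union> setC :: ((real^'n::finite) \<times> (real^'n)) set)"
    by (rule convex_sum) (auto simp: w1 w0 setA_def intro: hull_inc)
  then have a: "((\<chi> i. w i), 0) \<in> convex hull (setA \<union> setC :: ((real^'n::finite) \<times> (real^'n)) set)"
    by (simp add: combA)
  have "(\<Sum>i\<in>UNIV. w i *\<^sub>R ptC i) \<in> convex hull (setA \<union> setC :: ((real^'n::finite) \<times> (real^'n)) set)"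
    by (rule convex_sum) (auto simp: w1 w0 setC_def intro: hull_inc)
  then have c: "(0, (\<chi> i. w i)) \<in> convex hull (setA \<union> setC :: ((real^'n::finite) \<times> (real^'n)) set)"
    by (simp add: combC)
  have "(1/2) *\<^sub>R ((\<chi> i. w i), 0) + (1/2) *\<^sub>R (0, (\<chi> i. w i)) \<in> convex hull (setA \<union> setC :: ((real^'n::finite) \<times> (real^'n)) set)"
    by (rule convexD[OF convex_convex_hull a c]) auto
  moreover have "(1/2) *\<^sub>R ((\<chi> i. w i), 0) + (1/2) *\<^sub>R (0, (\<chi> i. w i)) = (ptB j :: (real^'n::finite) \<times> (real^'n))"
    using nr_pos[where 'n='n] by (simp add: prod_eq_iff vec_eq_iff w_def ptB_fst ptB_snd field_simps)
  ultimately show ?thesis by simp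
qed

lemma X_in_hull: "setX \<subseteq> convex hull (setA \<union> setC :: ((real^'n::finite) \<times> (real^'n)) set)"
  unfolding setX_def using B_in_hull by (auto simp: setB_def intro: hull_inc)

definition simplexS :: "((real^'n::finite) \<times> (real^'n)) set" where
  "simplexS = {p. (\<forall>i. fst p $ i \<ge> 0) \<and> (\<forall>i. snd p $ i \<ge> 0) \<and>
      (\<Sum>i\<in>UNIV. fst p $ i) + (\<Sum>i\<in>UNIV. snd p $ i) = 1}"

lemma hull_sub_simplex: "convex hull (setA \<union> setC) \<subseteq> (simplexS :: ((real^'n::finite) \<times> (real^'n)) set)"
proof (rule hull_minimal)
  show "setA \<union> setC \<subseteq> (simplexS :: ((real^'n::finite) \<times> (real^'n)) set)"
    by (auto simp: setA_def setC_def simplexS_def ptA_fst ptA_snd ptC_fst ptC_snd)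
  show "convex (simplexS :: ((real^'n::finite) \<times> (real^'n)) set)"
    unfolding convex_def
  proof (intro ballI allI impI)
    fix x y :: "(real^'n) \<times> (real^'n)" and u v :: real
    assume x: "x \<in> simplexS" and y: "y \<in> simplexS" and u: "0 \<le> u" and v: "0 \<le> v" and uv: "u + v = 1"
    have "(\<Sum>i\<in>UNIV. fst (u *\<^sub>R x + v *\<^sub>R y) $ i) + (\<Sum>i\<in>UNIV. snd (u *\<^sub>R x + v *\<^sub>R y) $ i)
      = u * ((\<Sum>i\<in>UNIV. fst x $ i) + (\<Sum>i\<in>UNIV. snd x $ i)) + v * ((\<Sum>i\<in>UNIV. fst y $ i) + (\<Sum>i\<in>UNIV. snd y $ i))"
      by (simp add: sum.distrib sum_distrib_left algebra_simps)
    also have "\<dots> = 1" using x y uv by (simp add: simplexS_def)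
    finally show "u *\<^sub>R x + v *\<^sub>R y \<in> simplexS"
      using x y u v by (simp add: simplexS_def)
  qed
qed

lemma T_exists:
  fixes d :: "'n::finite \<Rightarrow> real" and nr :: real
  assumes d0: "\<And>j. d j \<ge> 0" and ds: "sum d UNIV \<le> 1/2" and nr: "nr = 2 * real CARD('n) - 1" and nrp: "nr > 0"
  shows "\<exists>T\<ge>0. (\<Sum>j\<in>UNIV. max 0 (2*T - 2*nr*d j)) = T \<and> (\<exists>j. d j * nr \<le> T)"
proof (cases "\<exists>j. d j = 0")
  case True
  then obtain j where "d j = 0" by blast
  moreover have "(\<Sum>j\<in>UNIV. max 0 (2*0 - 2*nr*d j)) = 0"
  proof (intro sum.neutral ballI)
    fix j
    have "nr * d j \<ge> 0" using d0[of j] nrp by simp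
    then show "max 0 (2*0 - 2*nr*d j) = 0" by simp
  qed
  ultimately show ?thesis by (intro exI[of _ 0]) (auto intro!: exI[of _ j])
next
  case False
  define dm where "dm = Min (range d)"
  have dmin: "dm \<le> d j" for j unfolding dm_def by (rule Min_le) auto
  have "dm \<in> range d" unfolding dm_def by (rule Min_in) auto
  then have dmp: "dm > 0" using False d0 by (metis imageE order_le_less)
  define g where "g T = (\<Sum>j\<in>UNIV. max 0 (2*T - 2*nr*d j)) - T" for T
  define e where "e = nr * dm"
  define b where "b = max 1 e"
  have ep: "e > 0" using nrp dmp by (simp add: e_def)
  have ge: "g e \<le> 0"
  proof -
    have "(\<Sum>j\<in>UNIV. max 0 (2*e - 2*nr*d j)) = 0"
    proof (intro sum.neutral ballI)
      fix j
      have "nr * dm \<le> nr * d j" using dmin[of j] nrp by simp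
      then show "max 0 (2*e - 2*nr*d j) = 0" by (simp add: e_def)
    qed
    then show ?thesis using ep by (simp add: g_def)
  qed
  have gb: "g b \<ge> 0"
  proof -
    have "(\<Sum>j\<in>UNIV. (2*b - 2*nr*d j)) \<le> (\<Sum>j\<in>UNIV. max 0 (2*b - 2*nr*d j))"
      by (intro sum_mono) simp
    moreover have "(\<Sum>j\<in>UNIV. (2*b - 2*nr*d j)) = 2 * real CARD('n) * b - 2 * nr * sum d UNIV"
      by (simp add: sum_subtractf sum_distrib_left)
    moreover have "2 * nr * sum d UNIV \<le> nr" using ds nrp by simp
    moreover have "nr * b \<ge> nr" using nrp by (simp add: b_def)
    moreover have "2 * real CARD('n) * b = nr * b + b" unfolding nr by (simp add: algebra_simps)
    ultimately show ?thesis unfolding g_def by linarith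
  qed
  have cont: "continuous_on {e..b} g" unfolding g_def by (intro continuous_intros)
  obtain T where T: "e \<le> T" "T \<le> b" "g T = 0"
    using IVT'[of g e 0 b, OF ge gb _ cont] by (auto simp: b_def)
  have "\<exists>j. d j * nr \<le> T"
  proof (rule ccontr)
    assume "\<not> ?thesis"
    then have "(\<Sum>j\<in>UNIV. max 0 (2*T - 2*nr*d j)) = 0"
    proof (intro sum.neutral ballI)
      fix j assume "\<not> (\<exists>j. d j * nr \<le> T)"
      then have "T < d j * nr" by (meson not_le)
      then show "max 0 (2*T - 2*nr*d j) = 0" by (simp add: algebra_simps)
    qed
    then show False using T ep by (simp add: g_def)
  qed
  then show ?thesis using T ep by (intro exI[of _ T]) (auto simp: g_def)
qed

lemma keysum: "(\<Sum>j\<in>(UNIV::'n::finite set). t j * ((2 - (if i = j then 1 else 0)) / D)) = (2 * sum t UNIV - t i) / (D::real)"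
proof -
  have "(\<Sum>j\<in>(UNIV::'n::finite set). t j * ((2 - (if i = j then 1 else 0)) / D))
     = (\<Sum>j\<in>(UNIV::'n::finite set). (2 * t j - (if i = j then t j else 0)) / D)"
    by (rule sum.cong) auto
  also have "\<dots> = (\<Sum>j\<in>(UNIV::'n::finite set). (2 * t j - (if i = j then t j else 0))) / D"
    by (simp add: sum_divide_distrib)
  also have "(\<Sum>j\<in>(UNIV::'n::finite set). (2 * t j - (if i = j then t j else 0))) = 2 * sum t UNIV - t i"
    by (simp add: sum_subtractf sum_distrib_left)
  finally show ?thesis .
qed

lemma comb2:
  fixes x y :: "'a::real_vector"
  assumes "convex H" "x \<in> H" "y \<in> H" "u \<ge> 0" "v \<ge> 0"
  shows "\<exists>q\<in>H. u *\<^sub>R x + v *\<^sub>R y = (u + v) *\<^sub>R q"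
proof (cases "u + v = 0")
  case True
  then have "u = 0" "v = 0" using assms by auto
  then show ?thesis using assms by auto
next
  case False
  then have pos: "u + v > 0" using assms by auto
  have "(u/(u+v)) *\<^sub>R x + (v/(u+v)) *\<^sub>R y \<in> H"
    using assms pos by (intro convexD) (auto simp: add_divide_distrib[symmetric])
  moreover have "u *\<^sub>R x + v *\<^sub>R y = (u + v) *\<^sub>R ((u/(u+v)) *\<^sub>R x + (v/(u+v)) *\<^sub>R y)"
    using pos by (simp add: scaleR_add_right)
  ultimately show ?thesis by blast
qed


lemma tri_disj:
  assumes "x \<in> {ptA i, ptB i, ptC i}" "x \<in> {ptA j, ptB j, ptC (j::'n::finite)}"
  shows "i = (j::'n)"
  using assms by (auto simp: ptA_inj ptB_inj ptC_inj ptA_ne_B ptC_ne_B ptA_ne_C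
      ptA_ne_B[THEN not_sym] ptC_ne_B[THEN not_sym] ptA_ne_C[THEN not_sym])

lemma card_X: "card (setX :: ((real^'n::finite) \<times> (real^'n)) set) = 3 * CARD('n)"
proof -
  have cA: "card (setA :: ((real^'n::finite) \<times> (real^'n)) set) = CARD('n)"
    unfolding setA_def by (rule card_image) (auto simp: inj_on_def ptA_inj)
  have cB: "card (setB :: ((real^'n::finite) \<times> (real^'n)) set) = CARD('n)"
    unfolding setB_def by (rule card_image) (auto simp: inj_on_def ptB_inj)
  have cC: "card (setC :: ((real^'n::finite) \<times> (real^'n)) set) = CARD('n)"
    unfolding setC_def by (rule card_image) (auto simp: inj_on_def ptC_inj)
  have d1: "(setA :: ((real^'n::finite) \<times> (real^'n)) set) \<inter> setB = {}"
    by (auto simp: setA_def setB_def ptA_ne_B ptA_ne_B[THEN not_sym])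
  have d2: "((setA :: ((real^'n::finite) \<times> (real^'n)) set) \<union> setB) \<inter> setC = {}"
    by (auto simp: setA_def setB_def setC_def ptA_ne_C ptC_ne_B[THEN not_sym])
  have "card (setX :: ((real^'n::finite) \<times> (real^'n)) set) = card ((setA :: ((real^'n::finite) \<times> (real^'n)) set) \<union> setB) + card (setC :: ((real^'n::finite) \<times> (real^'n)) set)"
    unfolding setX_def using d2 by (intro card_Un_disjoint) (auto simp: setA_def setB_def setC_def)
  also have "card ((setA :: ((real^'n::finite) \<times> (real^'n)) set) \<union> setB) = 2 * CARD('n)"
    using d1 cA cB by (subst card_Un_disjoint) (auto simp: setA_def setB_def)
  finally show ?thesis using cC by simp
qed

lemma main_incl:
  fixes p :: "(real^'n::finite) \<times> (real^'n)"
  assumes p: "p \<in> simplexS"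
  shows "\<exists>S. good_set S \<and> p \<in> convex hull S"
proof -
  define nr where "nr = 2 * real CARD('n) - 1"
  have nrp: "nr > 0" using nr_pos[where 'n='n] by (simp add: nr_def)
  define a where "a i = fst p $ i" for i
  define c where "c i = snd p $ i" for i
  define d where "d i = min (a i) (c i)" for i
  have a0: "a i \<ge> 0" "c i \<ge> 0" for i using p by (auto simp: simplexS_def a_def c_def)
  have sac: "sum a UNIV + sum c UNIV = 1" using p by (simp add: simplexS_def a_def c_def)
  have d0: "d j \<ge> 0" for j using a0 by (simp add: d_def)
  have ds: "sum d UNIV \<le> 1/2"
  proof -
    have "sum d UNIV \<le> sum (\<lambda>i. (a i + c i)/2) UNIV" by (intro sum_mono) (simp add: d_def)
    also have "\<dots> = 1/2" using sac by (simp add: sum_divide_distrib[symmetric] sum.distrib)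
    finally show ?thesis .
  qed
  obtain T where T0: "T \<ge> 0" and Tsum: "(\<Sum>j\<in>UNIV. max 0 (2*T - 2*nr*d j)) = T"
      and j0: "\<exists>j. d j * nr \<le> T"
    using T_exists[OF d0 ds nr_def nrp] by blast
  define t where "t j = max 0 (2*T - 2*nr*d j)" for j
  have t0: "t j \<ge> 0" for j by (simp add: t_def)
  have tsum: "sum t UNIV = T" using Tsum by (simp add: t_def)
  define m where "m j = (2*T - t j)/(2*nr)" for j
  have m1: "m j = d j" if "d j * nr \<le> T" for j
  proof -
    have "t j = 2*T - 2*nr*d j" using that by (simp add: t_def algebra_simps)
    then show ?thesis using nrp by (simp add: m_def)
  qed
  have m2: "t j = 0 \<and> m j \<le> d j" if "\<not> d j * nr \<le> T" for j
  proof -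
    have tj: "t j = 0" using that by (simp add: t_def algebra_simps)
    have "T / nr \<le> d j" using that nrp by (simp add: divide_le_eq)
    then show ?thesis using tj nrp by (simp add: m_def)
  qed
  have md: "m j \<le> d j" for j using m1[of j] m2[of j] by (cases "d j * nr \<le> T") auto
  define al where "al j = a j - m j" for j
  define ga where "ga j = c j - m j" for j
  have al0: "al j \<ge> 0" for j using md[of j] by (simp add: al_def d_def)
  have ga0: "ga j \<ge> 0" for j using md[of j] by (simp add: ga_def d_def)
  define om where "om j = (if d j * nr \<le> T then (if a j \<le> c j then ptA j else ptC j) else ptB j)" for j
  define S where "S = setX - range om"
  have om_tri: "om j \<in> {ptA j, ptB j, ptC j}" for j by (simp add: om_def)
  have tri_X: "{ptA j, ptB j, ptC j} \<subseteq> setX" for j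
    by (auto simp: setX_def setA_def setB_def setC_def)
  have inS: "x \<in> S" if "x \<in> {ptA j, ptB j, ptC j}" "x \<noteq> om j" for x j
  proof -
    have "x \<notin> range om"
    proof
      assume "x \<in> range om"
      then obtain i where "x = om i" by blast
      then have "i = j" using om_tri[of i] that(1) tri_disj by metis
      then show False using that \<open>x = om i\<close> by simp
    qed
    then show ?thesis using that tri_X[of j] by (auto simp: S_def)
  qed
  have inj_om: "inj om"
    by (rule injI) (metis om_tri tri_disj)
  have cardS: "card S = 2 * CARD('n)"
  proof -
    have "range om \<subseteq> setX" using om_tri tri_X by blast
    moreover have "card (range om) = CARD('n)" using inj_om by (simp add: card_image)
    ultimately show ?thesis unfolding S_def using card_X[where 'n='n]
      by (subst card_Diff_subset) auto
  qed
  have good: "good_set S"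
    unfolding good_set_def
  proof (intro conjI allI)
    show "S \<subseteq> setX" by (auto simp: S_def)
    show "card S = 2 * CARD('n)" by (rule cardS)
    show "\<not> {ptA j, ptB j, ptC j} \<subseteq> S" for j
    proof
      assume "{ptA j, ptB j, ptC j} \<subseteq> S"
      then have "om j \<in> S" using om_tri[of j] by blast
      then show False by (simp add: S_def)
    qed
    obtain j where j: "d j * nr \<le> T" using j0 by blast
    have "om j \<noteq> ptB j" using j by (simp add: om_def ptA_ne_B ptC_ne_B)
    then have "ptB j \<in> S" by (intro inS[of _ j]) auto
    moreover have "ptB j \<notin> setA \<union> setC"
      by (auto simp: setA_def setC_def ptA_ne_B[THEN not_sym] ptC_ne_B[THEN not_sym])
    ultimately show "S \<noteq> setA \<union> setC" by blast
  qed
  define v where "v j = al j *\<^sub>R ptA j + t j *\<^sub>R ptB j + ga j *\<^sub>R ptC j" for j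
  have per: "\<exists>q\<in>convex hull S. v j = (al j + t j + ga j) *\<^sub>R q" for j
  proof (cases "d j * nr \<le> T")
    case True
    show ?thesis
    proof (cases "a j \<le> c j")
      case True2: True
      have "al j = 0" using m1[OF True] True2 by (simp add: al_def d_def)
      moreover have "om j = ptA j" using True True2 by (simp add: om_def)
      moreover have "ptB j \<in> S" "ptC j \<in> S" using calculation
        by (auto intro!: inS[of _ j] simp: ptA_ne_B[THEN not_sym] ptA_ne_C[THEN not_sym])
      ultimately show ?thesis
        using comb2[OF convex_convex_hull hull_inc[of "ptB j" S] hull_inc[of "ptC j" S] t0[of j] ga0[of j]]
        by (simp add: v_def)
    next
      case False2: False
      have "ga j = 0" using m1[OF True] False2 by (simp add: ga_def d_def)
      moreover have "om j = ptC j" using True False2 by (simp add: om_def)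
      moreover have "ptA j \<in> S" "ptB j \<in> S" using calculation
        by (auto intro!: inS[of _ j] simp: ptA_ne_C ptC_ne_B[THEN not_sym])
      ultimately show ?thesis
        using comb2[OF convex_convex_hull hull_inc[of "ptA j" S] hull_inc[of "ptB j" S] al0[of j] t0[of j]]
        by (simp add: v_def)
    qed
  next
    case False
    have "t j = 0" using m2[OF False] by simp
    moreover have "om j = ptB j" using False by (simp add: om_def)
    moreover have "ptA j \<in> S" "ptC j \<in> S" using calculation
      by (auto intro!: inS[of _ j] simp: ptA_ne_B ptC_ne_B)
    ultimately show ?thesis
      using comb2[OF convex_convex_hull hull_inc[of "ptA j" S] hull_inc[of "ptC j" S] al0[of j] ga0[of j]]
      by (simp add: v_def)
  qed
  then obtain q where q: "\<And>j. q j \<in> convex hull S" "\<And>j. v j = (al j + t j + ga j) *\<^sub>R q j"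
    by metis
  have msum: "sum m UNIV = T / 2"
  proof -
    have "sum m UNIV = (\<Sum>j\<in>UNIV. 2*T - t j) / (2*nr)"
      by (simp add: m_def sum_divide_distrib)
    also have "(\<Sum>j\<in>UNIV. 2*T - t j) = nr * T"
      by (simp add: sum_subtractf tsum nr_def algebra_simps)
    finally show ?thesis using nrp by simp
  qed
  have lsum: "(\<Sum>j\<in>UNIV. al j + t j + ga j) = 1"
    using sac msum tsum by (simp add: sum.distrib al_def ga_def sum_subtractf sum_distrib_left[symmetric])
  have p_eq: "p = (\<Sum>j\<in>UNIV. v j)"
  proof (rule prod_eqI)
    show "fst p = fst (\<Sum>j\<in>UNIV. v j)"
    proof (rule iffD2[OF vec_eq_iff], rule allI)
      fix i
      have "fst (\<Sum>j\<in>UNIV. v j) $ i = (\<Sum>j\<in>UNIV. al j * (if i = j then 1 else 0)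
             + t j * ((2 - (if i = j then 1 else 0)) / (2 * nr)))"
        by (simp add: v_def fst_sum sum_component ptA_fst ptB_fst ptC_fst nr_def)
      also have "\<dots> = al i + (2 * sum t UNIV - t i) / (2 * nr)"
        unfolding sum.distrib keysum by (simp add: mult_if01)
      also have "\<dots> = fst p $ i" by (simp add: tsum m_def[symmetric] al_def a_def)
      finally show "fst p $ i = fst (\<Sum>j\<in>UNIV. v j) $ i" by simp
    qed
    show "snd p = snd (\<Sum>j\<in>UNIV. v j)"
    proof (rule iffD2[OF vec_eq_iff], rule allI)
      fix i
      have "snd (\<Sum>j\<in>UNIV. v j) $ i = (\<Sum>j\<in>UNIV. ga j * (if i = j then 1 else 0)
             + t j * ((2 - (if i = j then 1 else 0)) / (2 * nr)))"
        by (simp add: v_def snd_sum sum_component ptA_snd ptB_snd ptC_snd nr_def add.commute)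
      also have "\<dots> = ga i + (2 * sum t UNIV - t i) / (2 * nr)"
        unfolding sum.distrib keysum by (simp add: mult_if01)
      also have "\<dots> = snd p $ i" by (simp add: tsum m_def[symmetric] ga_def c_def)
      finally show "snd p $ i = snd (\<Sum>j\<in>UNIV. v j) $ i" by simp
    qed
  qed
  have "(\<Sum>j\<in>UNIV. (al j + t j + ga j) *\<^sub>R q j) \<in> convex hull S"
    by (rule convex_sum) (auto simp: lsum q(1) al0 t0 ga0 add_nonneg_nonneg)
  then have "p \<in> convex hull S" using p_eq q(2) by simp
  then show ?thesis using good by blast
qed


theorem mainTheorem8:
  assumes "CARD('n::finite) \<ge> 2"
  shows "convex hull (setA \<union> setC :: ((real^'n) \<times> (real^'n)) set)
           = \<Union> {convex hull S | S :: ((real^'n) \<times> (real^'n)) set. good_set S}"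
proof
  show "convex hull (setA \<union> setC :: ((real^'n) \<times> (real^'n)) set)
           \<subseteq> \<Union> {convex hull S | S :: ((real^'n) \<times> (real^'n)) set. good_set S}"
  proof
    fix p :: "(real^'n) \<times> (real^'n)"
    assume "p \<in> convex hull (setA \<union> setC)"
    then have "p \<in> simplexS" using hull_sub_simplex by blast
    then obtain S where "good_set S" "p \<in> convex hull S" using main_incl by blast
    then show "p \<in> \<Union> {convex hull S | S :: ((real^'n) \<times> (real^'n)) set. good_set S}" by blast
  qed
  show "\<Union> {convex hull S | S :: ((real^'n) \<times> (real^'n)) set. good_set S}
      \<subseteq> convex hull (setA \<union> setC :: ((real^'n) \<times> (real^'n)) set)"
  proof (rule Union_least)
    fix H assume "H \<in> {convex hull S | S :: ((real^'n) \<times> (real^'n)) set. good_set S}"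
    then obtain S :: "((real^'n) \<times> (real^'n)) set" where H: "H = convex hull S" and g: "good_set S" by blast
    have "S \<subseteq> convex hull (setA \<union> setC)" using g X_in_hull by (auto simp: good_set_def)
    then show "H \<subseteq> convex hull (setA \<union> setC :: ((real^'n) \<times> (real^'n)) set)"
      unfolding H by (intro hull_minimal convex_convex_hull)
  qed
qed

end
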